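(* Let $p$ be a prime and $G_p=\mathbb{Z}_{p^{r_1}}^{k_1}\oplus\cdots\oplus\mathbb{Z}_{p^{r_n}}^{k_n}$ a finite abelian $p$-group with $r_1<\cdots<r_n$, $k_i\ge1$. If $g$ and $h$ are representative elements of $G_p$ that are automorphically equivalent (under an automorphism of $G_p$), then $g=h$. Consequently every element of $G_p$ is automorphically equivalent to a unique representative element of $G_p$.
   Context: Two elements are automorphically equivalent if some group automorphism maps one to the other. Elements of $\mathbb{Z}_{p^r}$ are identified with integers in $\{0,\dots,p^r-1\}$; a power of $p$ in $\mathbb{Z}_{p^r}$ means $p^s$ with $0\le s<r$. The repeat-free subgroup of $G_p$ is $G_p^{rf}=\mathbb{Z}_{p^{r_1}}\oplus\cdots\oplus\mathbb{Z}_{p^{r_n}}$, one copy of each distinct cyclic factor (direct summand of $G_p$). An element $g=(g_1,\dots,g_n)\in G_p^{rf}$ is a representative element of $G_p^{rf}$ if (1) every $g_i$ is $0$ or a power of $p$; (2) for all $i<j$ with $g_i,g_j$ nonzero, $g_i<g_j$; (3) for all $i<j$ with $g_i,g_j$ nonzero, the order of $g_i$ in $\mathbb{Z}_{p^{r_i}}$ is less than the order of $g_j$ in $\mathbb{Z}_{p^{r_j}}$. A representative element of $G_p$ is an element of $G_p^{rf}$ (all other coordinates $0$) which is a representative element of $G_p^{rf}$. *)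

theory Defs
  imports "HOL-Algebra.Group" "HOL-Computational_Algebra.Primes"
begin

text \<open>The finite abelian p-group
  G_p = Z_{p^{r_0}}^{k_0} + ... + Z_{p^{r_{n-1}}}^{k_{n-1}} (0-based indices).
  An element is a function x :: nat => nat => nat, where x i j is the j-th copy
  (j < k i) of the factor Z_{p^{r i}} (i < n), identified with a number in
  {0..<p^(r i)}; all coordinates outside the index range are 0.\<close>

definition Gp_carrier :: "nat \<Rightarrow> (nat \<Rightarrow> nat) \<Rightarrow> (nat \<Rightarrow> nat) \<Rightarrow> nat \<Rightarrow> (nat \<Rightarrow> nat \<Rightarrow> nat) set" where
  "Gp_carrier p r k n =
     {x. \<forall>i j. (i < n \<and> j < k i \<longrightarrow> x i j < p ^ r i) \<and>
               (\<not> (i < n \<and> j < k i) \<longrightarrow> x i j = 0)}"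

definition Gp :: "nat \<Rightarrow> (nat \<Rightarrow> nat) \<Rightarrow> (nat \<Rightarrow> nat) \<Rightarrow> nat \<Rightarrow> (nat \<Rightarrow> nat \<Rightarrow> nat) monoid" where
  "Gp p r k n =
     \<lparr> carrier = Gp_carrier p r k n,
       monoid.mult = (\<lambda>x y. \<lambda>i j. (x i j + y i j) mod p ^ r i),
       monoid.one = (\<lambda>i j. 0) \<rparr>"

definition cyc_order :: "nat \<Rightarrow> nat \<Rightarrow> nat" where
  "cyc_order m a = (LEAST d. 0 < d \<and> (d * a) mod m = 0)"

text \<open>Representative element: lies in the repeat-free subgroup (the first copy,
  j = 0, of each distinct cyclic factor; all other coordinates 0), and the
  coordinates g i 0 satisfy conditions (1)-(3).\<close>
definition is_representative :: "nat \<Rightarrow> (nat \<Rightarrow> nat) \<Rightarrow> (nat \<Rightarrow> nat) \<Rightarrow> nat \<Rightarrow> (nat \<Rightarrow> nat \<Rightarrow> nat) \<Rightarrow> bool" where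
  "is_representative p r k n g \<longleftrightarrow>
     g \<in> Gp_carrier p r k n \<and>
     (\<forall>i j. 0 < j \<longrightarrow> g i j = 0) \<and>
     (\<forall>i < n. g i 0 = 0 \<or> (\<exists>s < r i. g i 0 = p ^ s)) \<and>
     (\<forall>i j. i < j \<and> j < n \<and> g i 0 \<noteq> 0 \<and> g j 0 \<noteq> 0 \<longrightarrow>
        g i 0 < g j 0 \<and>
        cyc_order (p ^ r i) (g i 0) < cyc_order (p ^ r j) (g j 0))"

definition aut_equiv :: "nat \<Rightarrow> (nat \<Rightarrow> nat) \<Rightarrow> (nat \<Rightarrow> nat) \<Rightarrow> nat \<Rightarrow> (nat \<Rightarrow> nat \<Rightarrow> nat) \<Rightarrow> (nat \<Rightarrow> nat \<Rightarrow> nat) \<Rightarrow> bool" where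
  "aut_equiv p r k n g h \<longleftrightarrow>
     (\<exists>\<phi>. \<phi> \<in> iso (Gp p r k n) (Gp p r k n) \<and> \<phi> g = h)"

end

theory Submission
  imports Defs "HOL-Number_Theory.Cong"
begin


lemma Gp_simps[simp]:
  "carrier (Gp p r k n) = Gp_carrier p r k n"
  "x \<otimes>\<^bsub>Gp p r k n\<^esub> y = (\<lambda>i j. (x i j + y i j) mod p ^ r i)"
  "\<one>\<^bsub>Gp p r k n\<^esub> = (\<lambda>i j. 0)"
  by (simp_all add: Gp_def)

lemma Gp_pow: "x [^]\<^bsub>Gp p r k n\<^esub> (m::nat) = (\<lambda>i j. (m * x i j) mod p ^ r i)"
  by (induction m) (auto simp: mod_add_right_eq add.commute)

lemma in_carrier: "x \<in> Gp_carrier p r k n \<longleftrightarrow>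
   (\<forall>i j. (i < n \<and> j < k i \<longrightarrow> x i j < p ^ r i) \<and> (\<not> (i < n \<and> j < k i) \<longrightarrow> x i j = 0))"
  by (simp add: Gp_carrier_def)

lemma carrier_lt: "x \<in> Gp_carrier p r k n \<Longrightarrow> x i j \<noteq> 0 \<Longrightarrow> i < n \<and> j < k i \<and> x i j < p ^ r i"
  by (metis in_carrier)

lemma carrier_mod: "x \<in> Gp_carrier p r k n \<Longrightarrow> x i j mod p ^ r i = x i j"
  by (metis carrier_lt mod_0 mod_less)

lemma Gp_comm_group: "p > 0 \<Longrightarrow> comm_group (Gp p r k n)"
proof (rule comm_groupI, goal_cases)
  case (1 x y) then show ?case by (auto simp: in_carrier)
next
  case 2 then show ?case by (auto simp: in_carrier)
next
  case (3 x y z) then show ?case by (auto simp: mod_add_left_eq mod_add_right_eq add.assoc)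
next
  case (4 x y) then show ?case by (auto simp: add.commute)
next
  case (5 x) then show ?case using carrier_mod[of x] by auto
next
  case (6 x)
  show ?case
  proof (intro bexI[of _ "\<lambda>i j. (p ^ r i - x i j) mod p ^ r i"])
    show "(\<lambda>i j. (p ^ r i - x i j) mod p ^ r i) \<in> carrier (Gp p r k n)"
      using 6 by (auto simp: in_carrier)
    show "(\<lambda>i j. (p ^ r i - x i j) mod p ^ r i) \<otimes>\<^bsub>Gp p r k n\<^esub> x = \<one>\<^bsub>Gp p r k n\<^esub>"
    proof (simp, intro ext)
      fix i j
      have "x i j \<le> p ^ r i" using 6 carrier_lt[of x p r k n i j] by (cases "x i j = 0") auto
      then show "((p ^ r i - x i j) mod p ^ r i + x i j) mod p ^ r i = 0"
        by (simp add: mod_add_left_eq)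
    qed
  qed
qed

lemma iso_byInv:
  fixes G (structure)
  assumes "\<And>x. x \<in> carrier G \<Longrightarrow> f x \<in> carrier G"
    and "\<And>x y. x \<in> carrier G \<Longrightarrow> y \<in> carrier G \<Longrightarrow> f (x \<otimes> y) = f x \<otimes> f y"
    and "\<And>x. x \<in> carrier G \<Longrightarrow> g x \<in> carrier G"
    and "\<And>x. x \<in> carrier G \<Longrightarrow> g (f x) = x"
    and "\<And>x. x \<in> carrier G \<Longrightarrow> f (g x) = x"
  shows "f \<in> iso G G"
proof (rule isoI)
  show "f \<in> hom G G" using assms by (auto simp: hom_def)
  show "bij_betw f (carrier G) (carrier G)"
    by (rule bij_betw_byWitness[of _ g]) (use assms in auto)
qed

definition Pab :: "nat \<Rightarrow> ('a, 'b) monoid_scheme \<Rightarrow> nat \<Rightarrow> nat \<Rightarrow> 'a \<Rightarrow> bool" where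
  "Pab p G a b x \<longleftrightarrow> (\<exists>y\<in>carrier G. \<exists>z\<in>carrier G.
      x = y [^]\<^bsub>G\<^esub> (p ^ a) \<otimes>\<^bsub>G\<^esub> z \<and> z [^]\<^bsub>G\<^esub> (p ^ b) = \<one>\<^bsub>G\<^esub>)"

lemma Pab_hom:
  assumes "group G" "\<phi> \<in> hom G G" "x \<in> carrier G" "Pab p G a b x"
  shows "Pab p G a b (\<phi> x)"
proof -
  interpret group_hom G G \<phi> using assms by (simp add: group_hom_def group_hom_axioms_def)
  from assms(4) obtain y z where yz: "y \<in> carrier G" "z \<in> carrier G"
     "x = y [^]\<^bsub>G\<^esub> (p ^ a) \<otimes>\<^bsub>G\<^esub> z" "z [^]\<^bsub>G\<^esub> (p ^ b) = \<one>\<^bsub>G\<^esub>"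
    unfolding Pab_def by blast
  have "\<phi> x = \<phi> (y [^]\<^bsub>G\<^esub> (p ^ a)) \<otimes>\<^bsub>G\<^esub> \<phi> z"
    unfolding yz(3) by (rule hom_mult) (use yz in auto)
  also have "\<dots> = \<phi> y [^]\<^bsub>G\<^esub> (p ^ a) \<otimes>\<^bsub>G\<^esub> \<phi> z"
    by (simp only: hom_nat_pow[OF yz(1)])
  finally have 1: "\<phi> x = \<phi> y [^]\<^bsub>G\<^esub> (p ^ a) \<otimes>\<^bsub>G\<^esub> \<phi> z" .
  have "\<phi> z [^]\<^bsub>G\<^esub> (p ^ b) = \<phi> (z [^]\<^bsub>G\<^esub> (p ^ b))"
    by (simp only: hom_nat_pow[OF yz(2)])
  also have "\<dots> = \<one>\<^bsub>G\<^esub>" by (simp only: yz(4) hom_one)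
  finally have 2: "\<phi> z [^]\<^bsub>G\<^esub> (p ^ b) = \<one>\<^bsub>G\<^esub>" .
  have 3: "\<phi> y \<in> carrier G" "\<phi> z \<in> carrier G" using yz by auto
  show ?thesis unfolding Pab_def using 1 2 3 by blast
qed

lemma Pab_iso:
  assumes "group G" "\<phi> \<in> iso G G" "x \<in> carrier G"
  shows "Pab p G a b (\<phi> x) \<longleftrightarrow> Pab p G a b x"
proof
  show "Pab p G a b x \<Longrightarrow> Pab p G a b (\<phi> x)"
    by (rule Pab_hom[OF assms(1) iso_imp_homomorphism[OF assms(2)] assms(3)])
  assume h: "Pab p G a b (\<phi> x)"
  have i: "inv_into (carrier G) \<phi> \<in> iso G G" by (rule group.iso_set_sym[OF assms(1,2)])
  have c: "\<phi> x \<in> carrier G" by (rule hom_in_carrier[OF iso_imp_homomorphism[OF assms(2)] assms(3)])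
  have "Pab p G a b (inv_into (carrier G) \<phi> (\<phi> x))"
    by (rule Pab_hom[OF assms(1) iso_imp_homomorphism[OF i] c h])
  moreover have "inv_into (carrier G) \<phi> (\<phi> x) = x"
    by (rule inv_into_f_f) (use assms(2,3) in \<open>auto simp: iso_iff\<close>)
  ultimately show "Pab p G a b x" by simp
qed

lemma notP:
  assumes pp: "prime p" and g: "g \<in> Gp_carrier p r k n" and gi: "g i 0 = p ^ s"
    and sa: "s < a" and sb: "s + b < r i"
  shows "\<not> Pab p (Gp p r k n) a b g"
proof
  assume P: "Pab p (Gp p r k n) a b g"
  obtain y z where yz: "y \<in> Gp_carrier p r k n" "z \<in> Gp_carrier p r k n"
    "g = (\<lambda>i j. (p ^ a * y i j mod p ^ r i + z i j) mod p ^ r i)"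
    "(\<lambda>i j. p ^ b * z i j mod p ^ r i) = (\<lambda>i j. 0)"
  proof -
    from P obtain y z where
      "y \<in> carrier (Gp p r k n)" "z \<in> carrier (Gp p r k n)"
      "g = y [^]\<^bsub>Gp p r k n\<^esub> (p ^ a) \<otimes>\<^bsub>Gp p r k n\<^esub> z"
      "z [^]\<^bsub>Gp p r k n\<^esub> (p ^ b) = \<one>\<^bsub>Gp p r k n\<^esub>"
      unfolding Pab_def by blast
    then show ?thesis using that by (simp only: Gp_pow Gp_simps)
  qed
  have p1: "p > 1" using pp prime_gt_1_nat by blast
  have e1: "p ^ s = (p ^ a * y i 0 mod p ^ r i + z i 0) mod p ^ r i"
    using yz(3) gi by (metis)
  have e2: "p ^ b * z i 0 mod p ^ r i = 0" using yz(4) by meson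
  have d1: "p ^ Suc s dvd p ^ r i" by (rule le_imp_power_dvd) (use sb in simp)
  have d2: "p ^ Suc s dvd p ^ a * y i 0"
    by (rule dvd_mult2, rule le_imp_power_dvd) (use sa in simp)
  have d4: "p ^ (b + Suc s) dvd p ^ r i" by (rule le_imp_power_dvd) (use sb in simp)
  have d5: "p ^ r i dvd p ^ b * z i 0" using e2 by (simp only: mod_eq_0_iff_dvd)
  have "p ^ b * p ^ Suc s dvd p ^ b * z i 0"
    using dvd_trans[OF d4 d5] by (simp only: power_add)
  then have d3: "p ^ Suc s dvd z i 0" using p1
    by (subst (asm) nat_mult_dvd_cancel1) auto
  have "p ^ Suc s dvd (p ^ a * y i 0 mod p ^ r i + z i 0) mod p ^ r i"
    by (intro dvd_mod dvd_add d1 d2 d3)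
  then have "p ^ Suc s dvd p ^ s" using e1 by simp
  then show False using p1 power_dvd_imp_le by fastforce
qed

lemma rep_carrier: "is_representative p r k n g \<Longrightarrow> g \<in> Gp_carrier p r k n"
  by (simp add: is_representative_def)

lemma rep_j: "is_representative p r k n g \<Longrightarrow> 0 < j \<Longrightarrow> g i j = 0"
  by (simp add: is_representative_def)

lemma rep_pow: "is_representative p r k n g \<Longrightarrow> g i 0 \<noteq> 0 \<Longrightarrow> i < n \<and> 0 < k i \<and> (\<exists>s < r i. g i 0 = p ^ s)"
  unfolding is_representative_def by (metis carrier_lt)

lemma yesP:
  assumes pp: "prime p" and rep: "is_representative p r k n g"
    and H: "\<forall>i<n. \<forall>s. g i 0 = p ^ s \<longrightarrow> a \<le> s \<or> r i \<le> s + b"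
  shows "Pab p (Gp p r k n) a b g"
proof -
  have p1: "p > 1" using pp prime_gt_1_nat by blast
  have gc: "g \<in> Gp_carrier p r k n" using rep rep_carrier by blast
  define y :: "nat \<Rightarrow> nat \<Rightarrow> nat" where "y = (\<lambda>i j. if j = 0 \<and> p ^ a dvd g i 0 then g i 0 div p ^ a else (0::nat))"
  define z :: "nat \<Rightarrow> nat \<Rightarrow> nat" where "z = (\<lambda>i j. if j = 0 \<and> \<not> p ^ a dvd g i 0 then g i 0 else (0::nat))"
  have yc: "y \<in> Gp_carrier p r k n"
    unfolding in_carrier
  proof (intro allI conjI impI)
    fix i j
    show "i < n \<and> j < k i \<Longrightarrow> y i j < p ^ r i"
      using carrier_lt[OF gc, of i 0] p1 unfolding y_def
      by (cases "g i 0 = 0") (auto intro: le_less_trans[OF div_le_dividend])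
    show "\<not> (i < n \<and> j < k i) \<Longrightarrow> y i j = 0"
      using carrier_lt[OF gc, of i 0] unfolding y_def by (cases "g i 0 = 0") auto
  qed
  have zc: "z \<in> Gp_carrier p r k n"
    unfolding in_carrier
  proof (intro allI conjI impI)
    fix i j
    show "i < n \<and> j < k i \<Longrightarrow> z i j < p ^ r i"
      using carrier_lt[OF gc, of i 0] p1 unfolding z_def
      by (cases "g i 0 = 0") auto
    show "\<not> (i < n \<and> j < k i) \<Longrightarrow> z i j = 0"
      using carrier_lt[OF gc, of i 0] unfolding z_def by (cases "g i 0 = 0") auto
  qed
  have e1: "g = (\<lambda>i j. (p ^ a * y i j mod p ^ r i + z i j) mod p ^ r i)"
  proof (intro ext)
    fix i j
    show "g i j = (p ^ a * y i j mod p ^ r i + z i j) mod p ^ r i"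
    proof (cases "j = 0")
      case True
      then show ?thesis using carrier_mod[OF gc, of i 0] unfolding y_def z_def
        by auto
    next
      case False
      then show ?thesis using rep_j[OF rep, of j i] unfolding y_def z_def by auto
    qed
  qed
  have e2: "(\<lambda>i j. p ^ b * z i j mod p ^ r i) = (\<lambda>i j. 0)"
  proof (intro ext)
    fix i j
    show "p ^ b * z i j mod p ^ r i = 0"
    proof (cases "j = 0 \<and> \<not> p ^ a dvd g i 0")
      case True
      then have "g i 0 \<noteq> 0" by (metis dvd_0_right)
      then obtain s where s: "i < n" "s < r i" "g i 0 = p ^ s" using rep_pow[OF rep] by blast
      have "s < a" using True s(3) le_imp_power_dvd not_less by metis
      then have "r i \<le> b + s" using H s by force
      then have "p ^ r i dvd p ^ b * p ^ s" by (simp add: le_imp_power_dvd flip: power_add)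
      then show ?thesis using True s(3) unfolding z_def by simp
    next
      case False
      then show ?thesis unfolding z_def by auto
    qed
  qed
  show ?thesis unfolding Pab_def Gp_pow Gp_simps
    using yc zc e1 e2 by blast
qed



lemma cyc_pow:
  assumes pp: "prime p" and sr: "s \<le> r"
  shows "cyc_order (p ^ r) (p ^ s) = p ^ (r - s)"
  unfolding cyc_order_def
proof (rule Least_equality)
  have p1: "p > 1" using pp prime_gt_1_nat by blast
  show "0 < p ^ (r - s) \<and> p ^ (r - s) * p ^ s mod p ^ r = 0"
    using p1 sr by (simp flip: power_add)
  fix d assume d: "0 < d \<and> d * p ^ s mod p ^ r = 0"
  then have "p ^ s * p ^ (r - s) dvd p ^ s * d" using sr
    by (simp flip: power_add add: mod_eq_0_iff_dvd mult.commute)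
  then have "p ^ (r - s) dvd d" using p1 by (subst (asm) nat_mult_dvd_cancel1) auto
  then show "p ^ (r - s) \<le> d" using d by (simp add: dvd_imp_le)
qed

lemma rep_pow':
  assumes pp: "prime p" and gc: "g \<in> Gp_carrier p r k n" and gi: "g i 0 = p ^ s"
  shows "s < r i \<and> i < n \<and> 0 < k i"
proof -
  have p1: "p > 1" using pp by (rule prime_gt_1_nat)
  have "p ^ s \<noteq> 0" using p1 by simp
  then have "g i 0 \<noteq> 0" using gi by simp
  then have c: "i < n \<and> 0 < k i \<and> g i 0 < p ^ r i" by (rule carrier_lt[OF gc])
  then have "p ^ s < p ^ r i" using gi by simp
  then have "s < r i" using p1 power_less_imp_less_exp by blast
  then show ?thesis using c by blast
qed

lemma rep_order:
  assumes pp: "prime p" and rep: "is_representative p r k n g" and ij: "i < j" "j < n"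
    and gi: "g i 0 = p ^ s" and gj: "g j 0 = p ^ t"
  shows "s < t \<and> r i - s < r j - t"
proof -
  have p1: "p > 1" using pp prime_gt_1_nat by blast
  have sr: "s < r i" and tr: "t < r j"
    using rep_pow'[OF pp rep_carrier[OF rep]] gi gj by blast+
  have R: "\<forall>i j. i < j \<and> j < n \<and> g i 0 \<noteq> 0 \<and> g j 0 \<noteq> 0 \<longrightarrow>
        g i 0 < g j 0 \<and> cyc_order (p ^ r i) (g i 0) < cyc_order (p ^ r j) (g j 0)"
    using rep unfolding is_representative_def by blast
  have nz: "g i 0 \<noteq> 0" "g j 0 \<noteq> 0" using gi gj p1 by auto
  have "g i 0 < g j 0 \<and> cyc_order (p ^ r i) (g i 0) < cyc_order (p ^ r j) (g j 0)"
    using R ij nz by blast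
  moreover have "cyc_order (p ^ r i) (g i 0) = p ^ (r i - s)" "cyc_order (p ^ r j) (g j 0) = p ^ (r j - t)"
    using gi gj cyc_pow[OF pp] sr tr by simp_all
  ultimately have "p ^ s < p ^ t \<and> p ^ (r i - s) < p ^ (r j - t)"
    using gi gj by simp
  then show ?thesis using p1 power_less_imp_less_exp by blast
qed

lemma witness:
  assumes pp: "prime p" and rep: "is_representative p r k n h"
    and nP: "\<not> Pab p (Gp p r k n) a b h"
  shows "\<exists>i<n. \<exists>s. h i 0 = p ^ s \<and> s < a \<and> s + b < r i"
proof (rule ccontr)
  assume "\<not> ?thesis"
  then have "\<forall>i<n. \<forall>s. h i 0 = p ^ s \<longrightarrow> a \<le> s \<or> r i \<le> s + b" by (meson not_le)
  then show False using yesP[OF pp rep] nP by blast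
qed

lemma keyK:
  assumes pp: "prime p" and mono: "\<And>i j. i < j \<Longrightarrow> j < n \<Longrightarrow> r i < r j"
    and rg: "is_representative p r k n g" and rh: "is_representative p r k n h"
    and eqv: "\<And>a b. Pab p (Gp p r k n) a b g \<longleftrightarrow> Pab p (Gp p r k n) a b h"
    and gi: "g i 0 = p ^ s"
  shows "h i 0 = p ^ s"
proof -
  have p1: "p > 1" using pp prime_gt_1_nat by blast
  have gc: "g \<in> Gp_carrier p r k n" and hc: "h \<in> Gp_carrier p r k n"
    using rg rh rep_carrier by blast+
  have si: "s < r i" "i < n" using rep_pow'[OF pp gc gi] by auto
  have "\<not> Pab p (Gp p r k n) (s + 1) (r i - s - 1) g"
    by (rule notP[OF pp gc gi]) (use si in auto)
  then have "\<not> Pab p (Gp p r k n) (s + 1) (r i - s - 1) h" using eqv by blast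
  then obtain i' s' where i': "i' < n" "h i' 0 = p ^ s'" "s' < s + 1" "s' + (r i - s - 1) < r i'"
    using witness[OF pp rh] by blast
  have si': "s' < r i'" using rep_pow'[OF pp hc i'(2)] by auto
  have "\<not> Pab p (Gp p r k n) (s' + 1) (r i' - s' - 1) h"
    by (rule notP[OF pp hc i'(2)]) (use si' in auto)
  then have "\<not> Pab p (Gp p r k n) (s' + 1) (r i' - s' - 1) g" using eqv by blast
  then obtain i'' s'' where i'': "i'' < n" "g i'' 0 = p ^ s''" "s'' < s' + 1" "s'' + (r i' - s' - 1) < r i''"
    using witness[OF pp rg] by blast
  have si'': "s'' < r i''" using rep_pow'[OF pp gc i''(2)] by auto
  have A: "r i - s \<le> r i' - s'" using i'(4) si si' by linarith
  have B: "r i' - s' \<le> r i'' - s''" using i''(4) si' si'' by linarith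
  have "i'' = i"
  proof (rule ccontr)
    assume "i'' \<noteq> i"
    then consider "i'' < i" | "i < i''" by linarith
    then show False
    proof cases
      case 1
      then have "s'' < s \<and> r i'' - s'' < r i - s" using rep_order[OF pp rg 1 si(2) i''(2) gi] by blast
      then show ?thesis using A B by linarith
    next
      case 2
      then have "s < s''" using rep_order[OF pp rg 2 i''(1) gi i''(2)] by blast
      then show ?thesis using i'(3) i''(3) by linarith
    qed
  qed
  then have "s'' = s" using i''(2) gi p1 by (simp add: power_inject_exp)
  have ss1: "s' = s" using i'(3) i''(3) \<open>s'' = s\<close> by linarith
  have B': "r i' - s' \<le> r i - s" using B \<open>i'' = i\<close> \<open>s'' = s\<close> by simp
  have ss: "s' = s" "r i' = r i" using ss1 A B' si si' by linarith+
  have "i' = i"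
  proof (rule ccontr)
    assume "i' \<noteq> i"
    then consider "i' < i" | "i < i'" by linarith
    then show False
    proof cases
      case 1 then show False using mono[of i' i] si(2) ss by simp
    next
      case 2 then show False using mono[of i i'] i'(1) ss by simp
    qed
  qed
  then show ?thesis using i'(2) ss by simp
qed

lemma unique_rep:
  assumes pp: "prime p" and mono: "\<And>i j. i < j \<Longrightarrow> j < n \<Longrightarrow> r i < r j"
    and rg: "is_representative p r k n g" and rh: "is_representative p r k n h"
    and eqv: "\<And>a b. Pab p (Gp p r k n) a b g \<longleftrightarrow> Pab p (Gp p r k n) a b h"
  shows "g = h"
proof (intro ext)
  fix i j
  have gc: "g \<in> Gp_carrier p r k n" and hc: "h \<in> Gp_carrier p r k n"
    using rg rh rep_carrier by blast+
  show "g i j = h i j"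
  proof (cases "j = 0")
    case False
    then show ?thesis using rep_j[OF rg] rep_j[OF rh] by auto
  next
    case True
    show ?thesis
    proof (cases "g i 0 = 0")
      case False
      then obtain s where "g i 0 = p ^ s" using rep_pow[OF rg] by blast
      then show ?thesis using keyK[OF pp mono rg rh eqv] True by simp
    next
      case g0: True
      show ?thesis
      proof (rule ccontr)
        assume "g i j \<noteq> h i j"
        then have "h i 0 \<noteq> 0" using g0 True by simp
        then obtain s where "h i 0 = p ^ s" using rep_pow[OF rh] by blast
        then have "g i 0 = p ^ s" using keyK[OF pp mono rh rg eqv[symmetric]] by blast
        then show False using g0 pp by (simp add: prime_gt_0_nat)
      qed
    qed
  qed
qed

lemma aut_Pab:
  assumes pp: "prime p" and "aut_equiv p r k n g h" and "g \<in> Gp_carrier p r k n"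
  shows "Pab p (Gp p r k n) a b g \<longleftrightarrow> Pab p (Gp p r k n) a b h"
proof -
  obtain \<phi> where "\<phi> \<in> iso (Gp p r k n) (Gp p r k n)" "\<phi> g = h"
    using assms unfolding aut_equiv_def by blast
  moreover have "group (Gp p r k n)" using Gp_comm_group pp prime_gt_0_nat comm_group.axioms(2) by blast
  ultimately show ?thesis using Pab_iso[of "Gp p r k n" \<phi> g p a b] assms(3) by simp
qed



lemma Gp_group: "prime p \<Longrightarrow> group (Gp p r k n)"
  using Gp_comm_group prime_gt_0_nat comm_group.axioms(2) by blast

lemma aut_refl: "aut_equiv p r k n x x"
  unfolding aut_equiv_def using id_iso by force

lemma aut_trans: "aut_equiv p r k n x y \<Longrightarrow> aut_equiv p r k n y z \<Longrightarrow> aut_equiv p r k n x z"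
  unfolding aut_equiv_def by (metis comp_apply iso_set_trans)

lemma aut_sym:
  assumes "prime p" "aut_equiv p r k n x y" "x \<in> Gp_carrier p r k n"
  shows "aut_equiv p r k n y x"
proof -
  obtain \<phi> where \<phi>: "\<phi> \<in> iso (Gp p r k n) (Gp p r k n)" "\<phi> x = y"
    using assms unfolding aut_equiv_def by blast
  have "inv_into (carrier (Gp p r k n)) \<phi> \<in> iso (Gp p r k n) (Gp p r k n)"
    by (rule group.iso_set_sym[OF Gp_group[OF assms(1)] \<phi>(1)])
  moreover have "inv_into (carrier (Gp p r k n)) \<phi> y = x"
    unfolding \<phi>(2)[symmetric]
    by (rule inv_into_f_f) (use \<phi>(1) assms(3) in \<open>auto simp: iso_iff\<close>)
  ultimately show ?thesis unfolding aut_equiv_def by blast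
qed

lemma aut_iso: "\<phi> \<in> iso (Gp p r k n) (Gp p r k n) \<Longrightarrow> aut_equiv p r k n x (\<phi> x)"
  unfolding aut_equiv_def by blast

definition scale :: "nat \<Rightarrow> (nat \<Rightarrow> nat) \<Rightarrow> (nat \<Rightarrow> nat \<Rightarrow> nat) \<Rightarrow> (nat \<Rightarrow> nat \<Rightarrow> nat) \<Rightarrow> (nat \<Rightarrow> nat \<Rightarrow> nat)" where
  "scale p r w x = (\<lambda>i j. (w i j * x i j) mod p ^ r i)"

lemma scale_carrier: "prime p \<Longrightarrow> x \<in> Gp_carrier p r k n \<Longrightarrow> scale p r w x \<in> Gp_carrier p r k n"
  unfolding scale_def in_carrier by (auto simp: prime_gt_0_nat)

lemma scale_inv:
  assumes "prime p" "x \<in> Gp_carrier p r k n"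
    and inv: "\<And>i j. (w' i j * w i j) mod p ^ r i = 1 mod p ^ r i"
  shows "scale p r w' (scale p r w x) = x"
proof (intro ext)
  fix i j
  have "(w' i j * ((w i j * x i j) mod p ^ r i)) mod p ^ r i = (w' i j * w i j * x i j) mod p ^ r i"
    by (simp add: mod_mult_right_eq mult.assoc)
  also have "\<dots> = ((w' i j * w i j) mod p ^ r i * x i j) mod p ^ r i"
    by (simp add: mod_mult_left_eq)
  also have "\<dots> = x i j mod p ^ r i" unfolding inv by (simp add: mod_mult_left_eq)
  also have "\<dots> = x i j" by (rule carrier_mod[OF assms(2)])
  finally show "scale p r w' (scale p r w x) i j = x i j" unfolding scale_def .
qed

lemma scale_iso:
  assumes pp: "prime p"
    and inv: "\<And>i j. (w' i j * w i j) mod p ^ r i = 1 mod p ^ r i"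
  shows "scale p r w \<in> iso (Gp p r k n) (Gp p r k n)"
proof (rule iso_byInv[where g = "scale p r w'"], goal_cases)
  case (1 x) then show ?case using scale_carrier pp by simp
next
  case (2 x y)
  show ?case unfolding Gp_simps scale_def
  proof (intro ext)
    fix i j
    show "(w i j * ((x i j + y i j) mod p ^ r i)) mod p ^ r i =
          ((w i j * x i j) mod p ^ r i + (w i j * y i j) mod p ^ r i) mod p ^ r i"
      by (simp add: mod_mult_right_eq mod_add_eq distrib_left)
  qed
next
  case (3 x) then show ?case using scale_carrier pp by simp
next
  case (4 x) then show ?case using scale_inv[OF pp _ inv] by simp
next
  case (5 x)
  have inv': "\<And>i j. (w i j * w' i j) mod p ^ r i = 1 mod p ^ r i" using inv by (metis mult.commute)
  from 5 show ?case using scale_inv[OF pp _ inv'] by simp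
qed

lemma mod_key:
  fixes M M' c t :: nat
  assumes "M dvd c * M'"
  shows "(c * (t mod M')) mod M = (c * t) mod M"
proof -
  obtain q where q: "c * M' = M * q" using assms by blast
  have "c * t = c * (t mod M') + c * M' * (t div M')"
    by (metis div_mult_mod_eq add.commute distrib_left mult.assoc mult.commute)
  also have "\<dots> = c * (t mod M') + M * (q * (t div M'))" by (simp add: q mult.assoc)
  finally have "(c * t) mod M = (c * (t mod M') + M * (q * (t div M'))) mod M" by simp
  also have "\<dots> = (c * (t mod M')) mod M" by simp
  finally show ?thesis by simp
qed

definition tv :: "nat \<Rightarrow> (nat \<Rightarrow> nat) \<Rightarrow> nat \<Rightarrow> nat \<Rightarrow> nat \<Rightarrow> nat \<Rightarrow> nat \<Rightarrow> (nat \<Rightarrow> nat \<Rightarrow> nat) \<Rightarrow> (nat \<Rightarrow> nat \<Rightarrow> nat)" where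
  "tv p r a b a' b' c x = (\<lambda>i j. if i = a \<and> j = b then (x a b + c * x a' b') mod p ^ r a else x i j)"

lemma tv_carrier:
  assumes "prime p" "a < n" "b < k a" "x \<in> Gp_carrier p r k n"
  shows "tv p r a b a' b' c x \<in> Gp_carrier p r k n"
  using assms unfolding tv_def in_carrier by (auto simp: prime_gt_0_nat)

lemma tv_inv:
  assumes "x \<in> Gp_carrier p r k n" "(a, b) \<noteq> (a', b')" "(c1 + c2) mod p ^ r a = 0"
  shows "tv p r a b a' b' c2 (tv p r a b a' b' c1 x) = x"
proof (intro ext)
  fix i j
  have "((x a b + c1 * x a' b') mod p ^ r a + c2 * x a' b') mod p ^ r a
      = (x a b + (c1 + c2) * x a' b') mod p ^ r a"
    by (simp add: mod_add_left_eq distrib_right add.assoc)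
  also have "\<dots> = (x a b + ((c1 + c2) mod p ^ r a) * x a' b') mod p ^ r a"
    by (metis mod_add_right_eq mod_mult_left_eq)
  also have "\<dots> = x a b" using assms(3) carrier_mod[OF assms(1)] by simp
  finally have *: "((x a b + c1 * x a' b') mod p ^ r a + c2 * x a' b') mod p ^ r a = x a b" .
  show "tv p r a b a' b' c2 (tv p r a b a' b' c1 x) i j = x i j"
  proof (cases "i = a \<and> j = b")
    case True
    then have ia: "i = a" and jb: "j = b" by auto
    have "a' \<noteq> a \<or> b' \<noteq> b" using assms(2) by auto
    then show ?thesis unfolding tv_def ia jb using * by auto
  next
    case False
    then show ?thesis unfolding tv_def by auto
  qed
qed

lemma tv_iso:
  assumes pp: "prime p" and ab: "(a, b) \<noteq> (a', b')" "a < n" "b < k a"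
    and dv: "p ^ r a dvd c * p ^ r a'"
  shows "tv p r a b a' b' c \<in> iso (Gp p r k n) (Gp p r k n)"
proof (rule iso_byInv[where g = "tv p r a b a' b' (c * (p ^ r a - 1))"], goal_cases)
  case (1 x) then show ?case using tv_carrier pp ab by simp
next
  case (2 x y)
  show ?case unfolding Gp_simps
  proof (intro ext)
    fix i j
    let ?M = "p ^ r a" and ?M' = "p ^ r a'"
    have key: "(c * ((x a' b' + y a' b') mod ?M')) mod ?M = (c * (x a' b' + y a' b')) mod ?M"
      by (rule mod_key[OF dv])
    have "((x a b + y a b) mod ?M + c * ((x a' b' + y a' b') mod ?M')) mod ?M
        = ((x a b + y a b) + (c * ((x a' b' + y a' b') mod ?M')) mod ?M) mod ?M"
      by (simp only: mod_add_left_eq mod_add_right_eq)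
    also have "\<dots> = ((x a b + y a b) + c * (x a' b' + y a' b')) mod ?M"
      unfolding key by (simp add: mod_add_right_eq)
    also have "\<dots> = ((x a b + c * x a' b') + (y a b + c * y a' b')) mod ?M"
      by (simp only: distrib_left add_ac)
    also have "\<dots> = ((x a b + c * x a' b') mod ?M + (y a b + c * y a' b') mod ?M) mod ?M"
      by (rule mod_add_eq[symmetric])
    finally have *: "((x a b + y a b) mod ?M + c * ((x a' b' + y a' b') mod ?M')) mod ?M
        = ((x a b + c * x a' b') mod ?M + (y a b + c * y a' b') mod ?M) mod ?M" .
    show "tv p r a b a' b' c (\<lambda>i j. (x i j + y i j) mod p ^ r i) i j =
          (tv p r a b a' b' c x i j + tv p r a b a' b' c y i j) mod p ^ r i"
    proof (cases "i = a \<and> j = b")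
      case True
      then have ia: "i = a" and jb: "j = b" by auto
      show ?thesis unfolding tv_def ia jb by (simp only: if_True simp_thms *)
    next
      case False
      then show ?thesis unfolding tv_def by auto
    qed
  qed
next
  case (3 x) then show ?case using tv_carrier pp ab by simp
next
  have p0: "p ^ r a > 0" using pp by (simp add: prime_gt_0_nat)
  have e: "(c + c * (p ^ r a - 1)) mod p ^ r a = 0"
  proof -
    obtain M' where "p ^ r a = Suc M'" using p0 gr0_implies_Suc by blast
    then have "c + c * (p ^ r a - 1) = c * p ^ r a" by simp
    then show ?thesis by simp
  qed
  case (4 x) then have xc: "x \<in> Gp_carrier p r k n" by simp
  show ?case using tv_inv[OF xc ab(1) e] by simp
next
  have p0: "p ^ r a > 0" using pp by (simp add: prime_gt_0_nat)
  have e: "(c * (p ^ r a - 1) + c) mod p ^ r a = 0"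
  proof -
    obtain M' where "p ^ r a = Suc M'" using p0 gr0_implies_Suc by blast
    then have "c * (p ^ r a - 1) + c = c * p ^ r a" by simp
    then show ?thesis by simp
  qed
  case (5 x) then have xc: "x \<in> Gp_carrier p r k n" by simp
  show ?case using tv_inv[OF xc ab(1) e] by simp
qed

definition sw :: "nat \<Rightarrow> nat \<Rightarrow> nat \<Rightarrow> (nat \<Rightarrow> nat \<Rightarrow> nat) \<Rightarrow> (nat \<Rightarrow> nat \<Rightarrow> nat)" where
  "sw a b b' x = (\<lambda>i j. if i = a \<and> j = b then x a b' else if i = a \<and> j = b' then x a b else x i j)"

lemma sw_carrier:
  assumes "a < n" "b < k a" "b' < k a" "x \<in> Gp_carrier p r k n"
  shows "sw a b b' x \<in> Gp_carrier p r k n"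
  using assms unfolding sw_def in_carrier by auto

lemma sw_inv: "sw a b b' (sw a b b' x) = x"
  unfolding sw_def by (intro ext) auto

lemma sw_iso:
  assumes "a < n" "b < k a" "b' < k a"
  shows "sw a b b' \<in> iso (Gp p r k n) (Gp p r k n)"
proof (rule iso_byInv[where g = "sw a b b'"], goal_cases)
  case (2 x y) show ?case unfolding Gp_simps sw_def by (intro ext) auto
qed (use sw_carrier[where k=k and n=n and p=p and r=r, OF assms] sw_inv in auto)



definition supp :: "(nat \<Rightarrow> nat) \<Rightarrow> nat \<Rightarrow> (nat \<Rightarrow> nat \<Rightarrow> nat) \<Rightarrow> (nat \<times> nat) set" where
  "supp k n x = {(i, j). i < n \<and> j < k i \<and> x i j \<noteq> 0}"

lemma supp_finite: "finite (supp k n x)"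
proof (rule finite_subset)
  show "supp k n x \<subseteq> Sigma {..<n} (\<lambda>i. {..<k i})" unfolding supp_def by auto
qed auto

lemma factor_pow:
  fixes p m :: nat
  assumes "p > 1" "0 < m"
  shows "\<exists>s u. m = p ^ s * u \<and> \<not> p dvd u"
  using assms(2)
proof (induction m rule: less_induct)
  case (less m)
  show ?case
  proof (cases "p dvd m")
    case True
    then obtain m' where m': "m = p * m'" by blast
    then have "0 < m'" "m' < m" using less.prems assms(1) by auto
    then obtain s u where "m' = p ^ s * u" "\<not> p dvd u" using less.IH by blast
    then show ?thesis using m' by (intro exI[of _ "Suc s"] exI[of _ u]) simp
  next
    case False
    then show ?thesis by (intro exI[of _ 0] exI[of _ m]) simp
  qed
qed

lemma unit_part:
  fixes p m R :: nat
  assumes pp: "prime p" and m: "0 < m" "m < p ^ R"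
  shows "\<exists>w u s. (u * w) mod p ^ R = 1 mod p ^ R \<and> (w * m) mod p ^ R = p ^ s"
proof -
  have p1: "p > 1" using pp prime_gt_1_nat by blast
  obtain s u where su: "m = p ^ s * u" "\<not> p dvd u" using factor_pow[OF p1 m(1)] by blast
  have c1: "coprime p u" by (rule prime_imp_coprime[OF pp su(2)])
  have c2: "coprime (p ^ R) u" using c1 by simp
  have "coprime u (p ^ R)" by (rule coprime_commute[THEN iffD1, OF c2])
  then obtain w where w: "[u * w = Suc 0] (mod p ^ R)" using cong_solve_coprime_nat by blast
  then have uw: "(u * w) mod p ^ R = 1 mod p ^ R" by (simp add: cong_def)
  have wm: "w * m = p ^ s * (u * w)" unfolding su(1) by (simp only: mult.commute mult.left_commute)
  have "(w * m) mod p ^ R = (p ^ s * (u * w)) mod p ^ R" by (simp only: wm)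
  also have "\<dots> = (p ^ s * ((u * w) mod p ^ R)) mod p ^ R" by (simp only: mod_mult_right_eq)
  also have "\<dots> = (p ^ s * (1 mod p ^ R)) mod p ^ R" by (simp only: uw)
  also have "\<dots> = p ^ s mod p ^ R" by (simp only: mod_mult_right_eq mult_1_right)
  also have "\<dots> = p ^ s"
  proof -
    have "u \<noteq> 0" using su m by auto
    then have "p ^ s * 1 \<le> p ^ s * u" by (intro mult_le_mono2) simp
    then have "p ^ s \<le> m" using su(1) by simp
    then show ?thesis using m(2) by simp
  qed
  finally show ?thesis using uw by blast
qed

lemma normalize:
  assumes pp: "prime p" and xc: "x \<in> Gp_carrier p r k n"
  shows "\<exists>x'. aut_equiv p r k n x x' \<and> x' \<in> Gp_carrier p r k n \<and> supp k n x' = supp k n x \<and>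
            (\<forall>i j. x' i j \<noteq> 0 \<longrightarrow> (\<exists>s. x' i j = p ^ s))"
proof -
  have ex: "\<forall>ij. \<exists>wu. (snd wu * fst wu) mod p ^ r (fst ij) = 1 mod p ^ r (fst ij) \<and>
          (x (fst ij) (snd ij) \<noteq> 0 \<longrightarrow> (\<exists>s. (fst wu * x (fst ij) (snd ij)) mod p ^ r (fst ij) = p ^ s))"
  proof
    fix ij :: "nat \<times> nat"
    obtain i j where ij: "ij = (i, j)" by fastforce
    show "\<exists>wu. (snd wu * fst wu) mod p ^ r (fst ij) = 1 mod p ^ r (fst ij) \<and>
          (x (fst ij) (snd ij) \<noteq> 0 \<longrightarrow> (\<exists>s. (fst wu * x (fst ij) (snd ij)) mod p ^ r (fst ij) = p ^ s))"
    proof (cases "x i j = 0")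
      case True
      then show ?thesis using ij by (intro exI[of _ "(1, 1)"]) simp
    next
      case False
      then have "x i j < p ^ r i" using carrier_lt[OF xc] by blast
      then obtain w u s where "(u * w) mod p ^ r i = 1 mod p ^ r i" "(w * x i j) mod p ^ r i = p ^ s"
        using unit_part[OF pp] False by blast
      then show ?thesis using ij by (intro exI[of _ "(w, u)"]) auto
    qed
  qed
  then obtain F where F: "\<And>ij. (snd (F ij) * fst (F ij)) mod p ^ r (fst ij) = 1 mod p ^ r (fst ij) \<and>
          (x (fst ij) (snd ij) \<noteq> 0 \<longrightarrow> (\<exists>s. (fst (F ij) * x (fst ij) (snd ij)) mod p ^ r (fst ij) = p ^ s))"
    using choice[OF ex] by blast
  define W where "W = (\<lambda>i j. fst (F (i, j)))"
  define U where "U = (\<lambda>i j. snd (F (i, j)))"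
  have inv: "(U i j * W i j) mod p ^ r i = 1 mod p ^ r i" for i j
  proof -
    have "(snd (F (i, j)) * fst (F (i, j))) mod p ^ r (fst (i, j)) = 1 mod p ^ r (fst (i, j))"
      using F by blast
    then show ?thesis unfolding U_def W_def by (simp only: fst_conv)
  qed
  have pw: "\<exists>s. scale p r W x i j = p ^ s" if "x i j \<noteq> 0" for i j
    unfolding scale_def W_def using F[of "(i, j)"] that by simp
  have z: "\<And>i j. x i j = 0 \<Longrightarrow> scale p r W x i j = 0"
    unfolding scale_def by simp
  have p0: "\<And>s. p ^ s \<noteq> 0" using pp by (simp add: prime_gt_0_nat)
  show ?thesis
  proof (intro exI[of _ "scale p r W x"] conjI allI impI)
    show "aut_equiv p r k n x (scale p r W x)" by (rule aut_iso[OF scale_iso[OF pp inv]])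
    show "scale p r W x \<in> Gp_carrier p r k n" by (rule scale_carrier[OF pp xc])
    show "supp k n (scale p r W x) = supp k n x"
      unfolding supp_def using pw z p0 by fastforce
    fix i j assume "scale p r W x i j \<noteq> 0"
    then have "x i j \<noteq> 0" using z[of i j] by (cases "x i j = 0") simp_all
    then show "\<exists>s. scale p r W x i j = p ^ s" by (rule pw)
  qed
qed



definition mu :: "(nat \<Rightarrow> nat) \<Rightarrow> nat \<Rightarrow> (nat \<Rightarrow> nat \<Rightarrow> nat) \<Rightarrow> nat" where
  "mu k n x = 2 * card (supp k n x) + card {ij \<in> supp k n x. 0 < snd ij}"

lemma pow_lt:
  assumes pp: "prime p" and xc: "x \<in> Gp_carrier p r k n" and xi: "x i j = p ^ s"
  shows "s < r i \<and> i < n \<and> j < k i"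
proof -
  have p1: "p > 1" using pp prime_gt_1_nat by blast
  have "p ^ s \<noteq> 0" using p1 by simp
  then have "x i j \<noteq> 0" using xi by simp
  then have c: "i < n \<and> j < k i \<and> x i j < p ^ r i" by (rule carrier_lt[OF xc])
  then have "p ^ s < p ^ r i" using xi by simp
  then have "s < r i" using p1 power_less_imp_less_exp by blast
  then show ?thesis using c by blast
qed

lemma in_supp: "(i, j) \<in> supp k n x \<longleftrightarrow> i < n \<and> j < k i \<and> x i j \<noteq> 0"
  by (simp add: supp_def)

lemma kill_step:
  assumes pp: "prime p" and x1c: "x1 \<in> Gp_carrier p r k n"
    and ij: "(i, j) \<in> supp k n x1" and ij': "(i', j') \<in> supp k n x1" and ne: "(i, j) \<noteq> (i', j')"
    and v: "x1 i j = p ^ v" and v': "x1 i' j' = p ^ v'" and vv: "v' \<le> v" "r i + v' \<le> r i' + v"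
  shows "\<exists>x2. x2 \<in> Gp_carrier p r k n \<and> aut_equiv p r k n x1 x2 \<and> supp k n x2 = supp k n x1 - {(i, j)}"
proof -
  have p1: "p > 1" using pp prime_gt_1_nat by blast
  have ijn: "i < n" "j < k i" using ij by (auto simp: in_supp)
  define M where "M = p ^ r i"
  have M0: "M > 0" unfolding M_def using p1 by simp
  define c where "c = (M - 1) * p ^ (v - v')"
  have dv: "p ^ r i dvd c * p ^ r i'"
  proof -
    have "p ^ r i dvd p ^ (v - v' + r i')" by (rule le_imp_power_dvd) (use vv in linarith)
    then have "p ^ r i dvd (M - 1) * p ^ (v - v' + r i')" by (rule dvd_mult)
    then show ?thesis unfolding c_def by (simp add: power_add mult.assoc)
  qed
  define x2 where "x2 = tv p r i j i' j' c x1"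
  have iso: "tv p r i j i' j' c \<in> iso (Gp p r k n) (Gp p r k n)"
    by (rule tv_iso[where k=k and n=n, OF pp ne ijn dv])
  have x2c: "x2 \<in> Gp_carrier p r k n" unfolding x2_def by (rule tv_carrier[where k=k and n=n, OF pp ijn x1c])
  have cv: "c * p ^ v' = (M - 1) * p ^ v" unfolding c_def using vv
    by (simp add: mult.assoc flip: power_add)
  have "p ^ v + (M - 1) * p ^ v = M * p ^ v" using M0
    by (metis Suc_diff_1 mult_Suc)
  then have "(x1 i j + c * x1 i' j') mod M = 0" unfolding v v' cv by simp
  then have x2ij: "x2 i j = 0" unfolding x2_def tv_def M_def by simp
  have x2o: "x2 a b = x1 a b" if "(a, b) \<noteq> (i, j)" for a b
    using that unfolding x2_def tv_def by auto
  have "ab \<in> supp k n x2 \<longleftrightarrow> ab \<in> supp k n x1 - {(i, j)}" for ab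
  proof -
    obtain a b where ab: "ab = (a, b)" by fastforce
    show ?thesis
      unfolding ab using x2ij x2o[of a b] by (cases "(a, b) = (i, j)") (auto simp: in_supp)
  qed
  then have "supp k n x2 = supp k n x1 - {(i, j)}" by blast
  moreover have "aut_equiv p r k n x1 x2" unfolding x2_def by (rule aut_iso[OF iso])
  ultimately show ?thesis using x2c by blast
qed

lemma swap_step:
  assumes x1c: "x1 \<in> Gp_carrier p r k n"
    and ij: "(i, j) \<in> supp k n x1" and j0: "0 < j" and z: "x1 i 0 = 0"
  shows "\<exists>x2. x2 \<in> Gp_carrier p r k n \<and> aut_equiv p r k n x1 x2 \<and>
           supp k n x2 = insert (i, 0) (supp k n x1 - {(i, j)})"
proof -
  have ijn: "i < n" "j < k i" "x1 i j \<noteq> 0" using ij by (auto simp: in_supp)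
  have k0: "0 < k i" using ijn j0 by linarith
  define x2 where "x2 = sw i 0 j x1"
  have iso: "sw i 0 j \<in> iso (Gp p r k n) (Gp p r k n)" by (rule sw_iso[where k=k and n=n, OF ijn(1) k0 ijn(2)])
  have x2c: "x2 \<in> Gp_carrier p r k n" unfolding x2_def by (rule sw_carrier[OF ijn(1) k0 ijn(2) x1c])
  have "ab \<in> supp k n x2 \<longleftrightarrow> ab \<in> insert (i, 0) (supp k n x1 - {(i, j)})" for ab
  proof -
    obtain a b where ab: "ab = (a, b)" by fastforce
    show ?thesis unfolding ab x2_def sw_def using ijn k0 j0 z by (auto simp: in_supp)
  qed
  then have "supp k n x2 = insert (i, 0) (supp k n x1 - {(i, j)})" by blast
  moreover have "aut_equiv p r k n x1 x2" unfolding x2_def by (rule aut_iso[OF iso])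
  ultimately show ?thesis using x2c by blast
qed

definition mus :: "(nat \<times> nat) set \<Rightarrow> nat" where
  "mus S = 2 * card S + card {ij \<in> S. 0 < snd ij}"

lemma mus_remove:
  assumes "finite S" "a \<in> S"
  shows "mus (S - {a}) < mus S"
proof -
  have c1: "card (S - {a}) = card S - 1" using assms by simp
  have c0: "card S > 0" using assms card_gt_0_iff by blast
  have "{ij \<in> S - {a}. 0 < snd ij} \<subseteq> {ij \<in> S. 0 < snd ij}" by blast
  then have "card {ij \<in> S - {a}. 0 < snd ij} \<le> card {ij \<in> S. 0 < snd ij}"
    by (rule card_mono[rotated]) (use assms in simp)
  then show ?thesis unfolding mus_def using c1 c0 by linarith
qed

lemma mus_swap:
  assumes fin: "finite S" and ij: "(i, j) \<in> S" and j0: "0 < j" and i0: "(i, 0) \<notin> S"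
  shows "mus (insert (i, 0) (S - {(i, j)})) < mus S"
proof -
  have "(i, 0) \<notin> S - {(i, j)}" using i0 by blast
  then have c1: "card (insert (i, 0) (S - {(i, j)})) = card (S - {(i, j)}) + 1"
    using fin by simp
  have c2: "card (S - {(i, j)}) = card S - 1" using fin ij by simp
  have c0: "card S > 0" using fin ij card_gt_0_iff by blast
  have e: "{ij \<in> insert (i, 0) (S - {(i, j)}). 0 < snd ij} = {ij \<in> S. 0 < snd ij} - {(i, j)}"
    by auto
  have f: "finite {ij \<in> S. 0 < snd ij}" using fin by simp
  have m: "(i, j) \<in> {ij \<in> S. 0 < snd ij}" using ij j0 by simp
  have c3: "card ({ij \<in> S. 0 < snd ij} - {(i, j)}) = card {ij \<in> S. 0 < snd ij} - 1"
    using f m by simp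
  have c4: "card {ij \<in> S. 0 < snd ij} > 0" using f m card_gt_0_iff by blast
  show ?thesis unfolding mus_def e using c1 c2 c0 c3 c4 by linarith
qed

lemma final_rep:
  assumes pp: "prime p" and mono: "\<And>i j. i < j \<Longrightarrow> j < n \<Longrightarrow> r i < r j"
    and x1c: "x1 \<in> Gp_carrier p r k n"
    and pw: "\<And>i j. x1 i j \<noteq> 0 \<Longrightarrow> \<exists>s. x1 i j = p ^ s"
    and noA: "\<And>i j i' j' v v'. (i, j) \<in> supp k n x1 \<Longrightarrow> (i', j') \<in> supp k n x1 \<Longrightarrow>
        (i, j) \<noteq> (i', j') \<Longrightarrow> x1 i j = p ^ v \<Longrightarrow> x1 i' j' = p ^ v' \<Longrightarrow>
        \<not> (v' \<le> v \<and> r i + v' \<le> r i' + v)"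
    and noB: "\<And>i j. (i, j) \<in> supp k n x1 \<Longrightarrow> j = 0"
  shows "is_representative p r k n x1"
  unfolding is_representative_def
proof (intro conjI allI impI)
  have p1: "p > 1" using pp prime_gt_1_nat by blast
  show "x1 \<in> Gp_carrier p r k n" by (rule x1c)
  show "x1 i j = 0" if "0 < j" for i j
  proof (rule ccontr)
    assume "x1 i j \<noteq> 0"
    then have "(i, j) \<in> supp k n x1" using carrier_lt[OF x1c] by (auto simp: in_supp)
    then show False using noB that by blast
  qed
  show "x1 i 0 = 0 \<or> (\<exists>s<r i. x1 i 0 = p ^ s)" if "i < n" for i
  proof (cases "x1 i 0 = 0")
    case False
    then obtain s where s: "x1 i 0 = p ^ s" using pw by blast
    then show ?thesis using pow_lt[OF pp x1c s] by blast
  qed simp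
  fix i j assume ij: "i < j \<and> j < n \<and> x1 i 0 \<noteq> 0 \<and> x1 j 0 \<noteq> 0"
  obtain s where s: "x1 i 0 = p ^ s" using pw ij by blast
  obtain t where t: "x1 j 0 = p ^ t" using pw ij by blast
  have sr: "s < r i" and si: "(i, 0) \<in> supp k n x1" using pow_lt[OF pp x1c s] ij by (auto simp: in_supp)
  have tr: "t < r j" and tj: "(j, 0) \<in> supp k n x1" using pow_lt[OF pp x1c t] ij by (auto simp: in_supp)
  have ne: "(i, 0) \<noteq> (j, 0)" using ij by simp
  have n1: "\<not> (t \<le> s \<and> r i + t \<le> r j + s)" by (rule noA[OF si tj ne s t])
  have n2: "\<not> (s \<le> t \<and> r j + s \<le> r i + t)" by (rule noA[OF tj si ne[symmetric] t s])
  have rij: "r i < r j" using mono ij by blast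
  have st: "s < t" using n1 rij by linarith
  have o: "r i - s < r j - t" using n2 st sr tr by linarith
  have "p ^ s < p ^ t" using st p1 by simp
  then show "x1 i 0 < x1 j 0" using s t by simp
  have "p ^ (r i - s) < p ^ (r j - t)" using o p1 by simp
  then show "cyc_order (p ^ r i) (x1 i 0) < cyc_order (p ^ r j) (x1 j 0)"
    using s t cyc_pow[OF pp] sr tr by simp
qed

lemma exists_rep:
  assumes pp: "prime p" and mono: "\<And>i j. i < j \<Longrightarrow> j < n \<Longrightarrow> r i < r j"
  shows "x \<in> Gp_carrier p r k n \<Longrightarrow> \<exists>g. is_representative p r k n g \<and> aut_equiv p r k n x g"
proof (induction "mus (supp k n x)" arbitrary: x rule: less_induct)
  case (less x)
  obtain x1 where x1: "aut_equiv p r k n x x1" "x1 \<in> Gp_carrier p r k n" "supp k n x1 = supp k n x"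
    and pw: "\<forall>i j. x1 i j \<noteq> 0 \<longrightarrow> (\<exists>s. x1 i j = p ^ s)"
    using normalize[OF pp less.prems] by blast
  have IH: "\<exists>g. is_representative p r k n g \<and> aut_equiv p r k n x g"
    if y: "y \<in> Gp_carrier p r k n" "aut_equiv p r k n x1 y" "mus (supp k n y) < mus (supp k n x1)" for y
  proof -
    obtain g where "is_representative p r k n g" "aut_equiv p r k n y g"
      using less.hyps y x1(3) by metis
    then show ?thesis using aut_trans x1(1) y(2) by blast
  qed
  have fin: "finite (supp k n x1)" by (rule supp_finite)
  show ?case
  proof (cases "\<exists>i j i' j' v v'. (i, j) \<in> supp k n x1 \<and> (i', j') \<in> supp k n x1 \<and>
        (i, j) \<noteq> (i', j') \<and> x1 i j = p ^ v \<and> x1 i' j' = p ^ v' \<and> v' \<le> v \<and> r i + v' \<le> r i' + v")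
    case True
    then obtain i j i' j' v v' where A: "(i, j) \<in> supp k n x1" "(i', j') \<in> supp k n x1"
        "(i, j) \<noteq> (i', j')" "x1 i j = p ^ v" "x1 i' j' = p ^ v'" "v' \<le> v" "r i + v' \<le> r i' + v"
      by blast
    obtain x2 where x2: "x2 \<in> Gp_carrier p r k n" "aut_equiv p r k n x1 x2"
        "supp k n x2 = supp k n x1 - {(i, j)}"
      using kill_step[OF pp x1(2) A] by blast
    have "mus (supp k n x2) < mus (supp k n x1)" unfolding x2(3) by (rule mus_remove[OF fin A(1)])
    then show ?thesis using IH x2 by blast
  next
    case noA': False
    have noA: "\<not> (v' \<le> v \<and> r i + v' \<le> r i' + v)"
      if "(i, j) \<in> supp k n x1" "(i', j') \<in> supp k n x1" "(i, j) \<noteq> (i', j')"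
         "x1 i j = p ^ v" "x1 i' j' = p ^ v'" for i j i' j' v v'
      using noA' that by blast
    show ?thesis
    proof (cases "\<exists>i j. (i, j) \<in> supp k n x1 \<and> 0 < j")
      case True
      then obtain i j where ij: "(i, j) \<in> supp k n x1" "0 < j" by blast
      have ijn: "i < n" "j < k i" "x1 i j \<noteq> 0" using ij by (auto simp: in_supp)
      have z: "x1 i 0 = 0"
      proof (rule ccontr)
        assume nz: "x1 i 0 \<noteq> 0"
        then have i0: "(i, 0) \<in> supp k n x1" using ijn by (auto simp: in_supp)
        obtain v where v: "x1 i j = p ^ v" using pw ijn by blast
        obtain u where u: "x1 i 0 = p ^ u" using pw nz by blast
        have ne: "(i, j) \<noteq> (i, 0)" using ij by simp
        show False
        proof (cases "u \<le> v")
          case True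
          then show False using noA[OF ij(1) i0 ne v u] by simp
        next
          case False
          then show False using noA[OF i0 ij(1) ne[symmetric] u v] by simp
        qed
      qed
      obtain x2 where x2: "x2 \<in> Gp_carrier p r k n" "aut_equiv p r k n x1 x2"
          "supp k n x2 = insert (i, 0) (supp k n x1 - {(i, j)})"
        using swap_step[OF x1(2) ij z] by blast
      have "(i, 0) \<notin> supp k n x1" using z by (simp add: in_supp)
      then have "mus (supp k n x2) < mus (supp k n x1)" unfolding x2(3)
        by (rule mus_swap[OF fin ij])
      then show ?thesis using IH x2 by blast
    next
      case False
      then have noB: "\<And>i j. (i, j) \<in> supp k n x1 \<Longrightarrow> j = 0" using neq0_conv by blast
      have "is_representative p r k n x1"
        by (rule final_rep[OF pp mono x1(2) _ noA noB]) (use pw in auto)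
      then show ?thesis using x1(1) by blast
    qed
  qed
qed

theorem mainTheorem5:
  fixes p n :: nat and r k :: "nat \<Rightarrow> nat"
  assumes "prime p"
    and "\<And>i j. i < j \<Longrightarrow> j < n \<Longrightarrow> r i < r j"
    and "\<And>i. i < n \<Longrightarrow> 1 \<le> k i"
  shows "(\<forall>g h. is_representative p r k n g \<and> is_representative p r k n h \<and>
                 aut_equiv p r k n g h \<longrightarrow> g = h) \<and>
         (\<forall>x \<in> carrier (Gp p r k n).
                 \<exists>!g. is_representative p r k n g \<and> aut_equiv p r k n x g)"
proof -
  have U: "g = h" if "is_representative p r k n g" "is_representative p r k n h"
     "aut_equiv p r k n g h" for g h
  proof (rule unique_rep[OF assms(1,2) that(1,2)])
    fix a b
    show "Pab p (Gp p r k n) a b g \<longleftrightarrow> Pab p (Gp p r k n) a b h"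
      by (rule aut_Pab[OF assms(1) that(3) rep_carrier[OF that(1)]])
  qed
  show ?thesis
  proof (intro conjI allI impI ballI)
    fix g h
    assume "is_representative p r k n g \<and> is_representative p r k n h \<and> aut_equiv p r k n g h"
    then show "g = h" using U by blast
  next
    fix x assume "x \<in> carrier (Gp p r k n)"
    then have xc: "x \<in> Gp_carrier p r k n" by simp
    obtain g where g: "is_representative p r k n g" "aut_equiv p r k n x g"
      using exists_rep[OF assms(1,2) xc] by blast
    show "\<exists>!g. is_representative p r k n g \<and> aut_equiv p r k n x g"
    proof (rule ex1I[of _ g])
      show "is_representative p r k n g \<and> aut_equiv p r k n x g" using g by blast
      fix g' assume g': "is_representative p r k n g' \<and> aut_equiv p r k n x g'"
      have "aut_equiv p r k n g x" by (rule aut_sym[OF assms(1) g(2) xc])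
      then have "aut_equiv p r k n g g'" using g' aut_trans by blast
      then show "g' = g" using U g(1) g' by metis
    qed
  qed
qed


end
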